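(* For every integer $r\ge 0$, there do not exist $x,y,z,w\in\mathbb{N}=\{0,1,2,\dots\}$ such that $$x^2+y^2+z^2+w^2=4^{2r+1}\cdot 6\quad\text{and}\quad 3x+10y\in\mathcal{S}.$$
   Context: $\mathcal{S}=\{x^2: x\in\mathbb{Z}\}$ denotes the set of integer squares. (Note that $(a,b)=(3,10)$ satisfies $\gcd(a,b)=1$ and $a^2+b^2=109$ is prime, so this shows that the hypothesis $\operatorname{ord}_2(n)\le C$ cannot be dropped from the statement that sufficiently large $n$ admit such a representation.) *)

theory Defs
  imports Main
begin

definition int_squares :: "int set" where
  "int_squares = {x^2 | x. x \<in> (\<int>::int set)}"

end

theory Submission
  imports Defs
begin

lemma sq_mod8_odd: "odd (x::nat) \<Longrightarrow> x^2 mod 8 = 1"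
proof -
  assume "odd x"
  then obtain k where k: "x = 2*k+1" by (metis oddE)
  have "even (k*(k+1))" by simp
  then obtain j where j: "k*(k+1) = 2*j" by (metis evenE)
  have "x^2 = 4*(k*(k+1)) + 1" by (simp add: k power2_eq_square algebra_simps)
  also have "... = 4*(2*j) + 1" by (simp only: j)
  finally show ?thesis by simp
qed

lemma sq_mod8_even: "even (x::nat) \<Longrightarrow> x^2 mod 8 = 0 \<or> x^2 mod 8 = 4"
proof -
  assume "even x"
  then obtain k where k: "x = 2*k" by (metis evenE)
  have "x^2 = 4*k^2" by (simp add: k power2_eq_square)
  show ?thesis
  proof (cases "even (k^2)")
    case True
    then obtain j where "k^2 = 2*j" by (metis evenE)
    then have "x^2 = 8*j" using \<open>x^2 = 4*k^2\<close> by simp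
    then show ?thesis by simp
  next
    case False
    then obtain j where "k^2 = 2*j+1" by (metis oddE)
    then have "x^2 = 8*j+4" using \<open>x^2 = 4*k^2\<close> by simp
    then show ?thesis by simp
  qed
qed

lemma aux8:
  fixes X Y Z W :: nat
  assumes "(X+Y+Z+W) mod 8 = 0" "X=0 \<or> X=1 \<or> X=4" "Y=0 \<or> Y=1 \<or> Y=4"
    "Z=0 \<or> Z=1 \<or> Z=4" "W=0 \<or> W=1 \<or> W=4"
  shows "X \<noteq> 1 \<and> Y \<noteq> 1 \<and> Z \<noteq> 1 \<and> W \<noteq> 1"
  using assms by (elim disjE) simp_all

lemma sq_mod8: "(x::nat)^2 mod 8 = 0 \<or> x^2 mod 8 = 1 \<or> x^2 mod 8 = 4"
  using sq_mod8_odd[of x] sq_mod8_even[of x] by blast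

lemma all_even:
  fixes x y z w m :: nat
  assumes "x^2+y^2+z^2+w^2 = 8*m"
  shows "even x \<and> even y \<and> even z \<and> even w"
proof -
  have dm: "\<And>u::nat. u = 8*(u div 8) + u mod 8" by simp
  have "8*(x^2 div 8 + y^2 div 8 + z^2 div 8 + w^2 div 8)
      + (x^2 mod 8 + y^2 mod 8 + z^2 mod 8 + w^2 mod 8) = 8*m"
  proof -
    have "8*(x^2 div 8 + y^2 div 8 + z^2 div 8 + w^2 div 8)
      + (x^2 mod 8 + y^2 mod 8 + z^2 mod 8 + w^2 mod 8) =
      (8*(x^2 div 8) + x^2 mod 8) + (8*(y^2 div 8) + y^2 mod 8) + (8*(z^2 div 8) + z^2 mod 8)
       + (8*(w^2 div 8) + w^2 mod 8)"
      by (simp only: distrib_left add.assoc add.left_commute)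
    also have "... = 8*m" by (simp only: mult_div_mod_eq assms)
    finally show ?thesis .
  qed
  then have "8 dvd 8*(x^2 div 8 + y^2 div 8 + z^2 div 8 + w^2 div 8)
      + (x^2 mod 8 + y^2 mod 8 + z^2 mod 8 + w^2 mod 8)" by simp
  then have h: "8 dvd (x^2 mod 8 + y^2 mod 8 + z^2 mod 8 + w^2 mod 8)"
    by (metis dvd_add_right_iff dvd_triv_left)
  then have h: "(x^2 mod 8 + y^2 mod 8 + z^2 mod 8 + w^2 mod 8) mod 8 = 0"
    by (simp only: dvd_eq_mod_eq_0)
  from aux8[OF h sq_mod8 sq_mod8 sq_mod8 sq_mod8]
  have "x^2 mod 8 \<noteq> 1 \<and> y^2 mod 8 \<noteq> 1 \<and> z^2 mod 8 \<noteq> 1 \<and> w^2 mod 8 \<noteq> 1" .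
  then show ?thesis using sq_mod8_odd by blast
qed

lemma descent:
  fixes x y z w :: nat
  assumes "x^2+y^2+z^2+w^2 = 4^k*6"
  shows "2^k dvd x \<and> 2^k dvd y \<and> 2^k dvd z \<and> 2^k dvd w \<and>
    (x div 2^k)^2 + (y div 2^k)^2 + (z div 2^k)^2 + (w div 2^k)^2 = 6"
  using assms
proof (induction k arbitrary: x y z w)
  case 0
  then show ?case by simp
next
  case (Suc k)
  have "x^2+y^2+z^2+w^2 = 8*(4^k*3)" using Suc.prems by simp
  then have ev: "even x \<and> even y \<and> even z \<and> even w" by (rule all_even)
  then obtain a b c d where abcd: "x = 2*a" "y = 2*b" "z = 2*c" "w = 2*d"
    by (metis evenE)
  have "a^2+b^2+c^2+d^2 = 4^k*6" using Suc.prems by (simp add: abcd power2_eq_square)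
  from Suc.IH[OF this] have IH: "2^k dvd a \<and> 2^k dvd b \<and> 2^k dvd c \<and> 2^k dvd d \<and>
    (a div 2^k)^2 + (b div 2^k)^2 + (c div 2^k)^2 + (d div 2^k)^2 = 6" .
  have dv: "\<And>u::nat. 2 * u div 2^Suc k = u div 2^k"
    by (simp add: div_mult2_eq)
  show ?case using IH by (simp add: abcd dv)
qed

lemma base6:
  fixes a b c d :: nat
  assumes "a^2+b^2+c^2+d^2 = 6"
  shows "3*a+10*b \<in> {3,6,10,13,16,20,23}"
proof -
  have le: "\<And>u::nat. u^2 \<le> 6 \<Longrightarrow> u \<in> {0,1,2}"
  proof -
    fix u :: nat assume "u^2 \<le> 6"
    have "u < 3" proof (rule ccontr)
      assume "\<not> u < 3" then have "3^2 \<le> u^2" by (intro power_mono) auto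
      with \<open>u^2 \<le> 6\<close> show False by simp
    qed
    then show "u \<in> {0,1,2}" by auto
  qed
  have "a \<in> {0,1,2}" "b \<in> {0,1,2}" "c \<in> {0,1,2}" "d \<in> {0,1,2}"
    using assms by (intro le; linarith)+
  then show ?thesis using assms by auto
qed

lemma sq4:
  fixes n t :: nat
  assumes "4^r * n = t^2"
  shows "\<exists>s. n = s^2"
  using assms
proof (induction r arbitrary: t)
  case 0
  then show ?case by auto
next
  case (Suc r)
  have "even (t^2)" using Suc.prems by (metis dvd_mult2 even_numeral power_Suc)
  then have "even t" by simp
  then obtain s where s: "t = 2*s" by (metis evenE)
  have "4^r * n = s^2" using Suc.prems by (simp add: s power2_eq_square)
  then show ?case by (rule Suc.IH)
qed

theorem mainTheorem3:
  fixes r :: nat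
  shows "\<not> (\<exists>x y z w :: nat.
            x^2 + y^2 + z^2 + w^2 = 4^(2*r+1) * 6 \<and>
            int (3*x + 10*y) \<in> int_squares)"
proof
  assume "\<exists>x y z w :: nat.
            x^2 + y^2 + z^2 + w^2 = 4^(2*r+1) * 6 \<and>
            int (3*x + 10*y) \<in> int_squares"
  then obtain x y z w :: nat where e: "x^2 + y^2 + z^2 + w^2 = 4^(2*r+1) * 6"
    and sq: "int (3*x + 10*y) \<in> int_squares" by blast
  define k where "k = 2*r+1"
  from descent[OF e[folded k_def]] obtain a b c d where
    abcd: "x = 2^k*a" "y = 2^k*b" and s6: "a^2+b^2+c^2+d^2 = 6"
    by (metis dvd_mult_div_cancel)
  have m: "3*a+10*b \<in> {3,6,10,13,16,20,23}" by (rule base6[OF s6])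
  from sq obtain t :: int where t: "int (3*x + 10*y) = t^2" unfolding int_squares_def by blast
  have "3*x+10*y = (nat \<bar>t\<bar>)^2"
    by (metis t nat_int nat_power_eq abs_ge_zero power2_abs)
  moreover have "3*x+10*y = 4^r * (2*(3*a+10*b))"
  proof -
    have p: "(2::nat)^k = 2 * 4^r" by (simp add: k_def power_mult)
    show ?thesis by (simp add: abcd p algebra_simps)
  qed
  ultimately obtain s where s: "2*(3*a+10*b) = s^2" using sq4 by metis
  have "s^2 \<le> 46" using m s by auto
  have "s < 7" proof (rule ccontr)
    assume "\<not> s < 7" then have "7^2 \<le> s^2" by (intro power_mono) auto
    with \<open>s^2 \<le> 46\<close> show False by simp
  qed
  then have "s \<in> {0,1,2,3,4,5,6}" by auto
  moreover have "\<forall>v\<in>{3,6,10,13,16,20,23::nat}. \<forall>s'\<in>{0,1,2,3,4,5,6::nat}. 2*v \<noteq> s'^2"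
    by (simp add: power2_eq_square)
  ultimately show False using m s by blast
qed

end
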